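(* Let $\mu\in\Lambda$ with $\operatorname{genus}(\mu)=\operatorname{genus}(\mathcal M)$. Then $F_\mu$ consists of a single point, and this point is a vertex of $V_0$. Conversely, every vertex $v$ of $V_0$ satisfies $\{v\}=F_\mu$ for some $\mu\in\Lambda$ with $\operatorname{genus}(\mu)=\operatorname{genus}(\mathcal M)$.
   Context: Let $\mathcal M$ be a regular matroid on a finite ground set $E$, represented by a totally unimodular matrix $M$; $\mathcal F=\ker M\subseteq\mathbb R^E$ with Euclidean inner product, $\Lambda=\ker M\cap\mathbb Z^E$, $\operatorname{genus}(\mathcal M)=\dim\mathcal F$, $V_0=\{x\in\mathcal F:\|x\|\le\|x-\lambda\|\ \forall\lambda\in\Lambda\}$. For $x\in\mathbb R^E$, $x_e$ is its $e$-coordinate and $\operatorname{supp}(x)=\{e:x_e\ne0\}$; for $\mu\in\Lambda$, $\operatorname{genus}(\mu)=\dim\ker M_\mu$, where $M_\mu$ is the submatrix of columns in $\operatorname{supp}\mu$. A circuit in $\Lambda$ is a flow with coordinates in $\{-1,0,1\}$ whose support is a circuit (minimal dependent set of columns) of $\mathcal M$; $\Xi$ is the set of these. For $\gamma\in\Xi$, $F_\gamma=\{x\in\mathcal F:2\langle x,\gamma\rangle=\|\gamma\|^2\}$. For $\mu\in\Lambda$, $F_\mu=\bigcap F_\gamma$, the intersection over all $\gamma\in\Xi$ with $\operatorname{supp}\gamma\subseteq\operatorname{supp}\mu$ and $\operatorname{sgn}\gamma_e=\operatorname{sgn}\mu_e$ for all $e\in\operatorname{supp}\gamma$. *)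

theory Defs
  imports "HOL-Analysis.Analysis"
begin

text \<open>Regular matroid on ground set E (a finite type 'e), represented by a real matrix
  M with rows indexed by a finite type 'r and columns indexed by 'e.\<close>

definition det_fun :: "nat \<Rightarrow> (nat \<Rightarrow> nat \<Rightarrow> real) \<Rightarrow> real" where
  "det_fun k A = (\<Sum>p | p permutes {..<k}. of_int (sign p) * (\<Prod>i<k. A i (p i)))"

definition totally_unimodular :: "real^'e^'r \<Rightarrow> bool" where
  "totally_unimodular M \<longleftrightarrow>
     (\<forall>(rs :: 'r list) (cs :: 'e list). distinct rs \<longrightarrow> distinct cs \<longrightarrow> length rs = length cs \<longrightarrow>
        det_fun (length rs) (\<lambda>i j. M $ (rs ! i) $ (cs ! j)) \<in> {-1, 0, 1})"

definition supp :: "real^'e \<Rightarrow> 'e set" where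
  "supp x = {e. x $ e \<noteq> 0}"

definition flows :: "real^'e^'r \<Rightarrow> (real^'e) set" where
  "flows M = {x. M *v x = 0}"

definition int_flows :: "real^'e^'r \<Rightarrow> (real^'e) set" where
  "int_flows M = {x \<in> flows M. \<forall>e. x $ e \<in> \<int>}"

definition genus_matroid :: "real^'e^'r \<Rightarrow> nat" where
  "genus_matroid M = dim (flows M)"

text \<open>genus of mu: dimension of the kernel of the column submatrix M_mu, i.e. of the
  space of vectors supported on supp mu that lie in ker M.\<close>
definition genus_flow :: "real^'e^'r \<Rightarrow> real^'e \<Rightarrow> nat" where
  "genus_flow M \<mu> = dim {x \<in> flows M. supp x \<subseteq> supp \<mu>}"

definition dependent_cols :: "real^'e^'r \<Rightarrow> 'e set \<Rightarrow> bool" where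
  "dependent_cols M D \<longleftrightarrow> (\<exists>x. x \<noteq> 0 \<and> M *v x = 0 \<and> supp x \<subseteq> D)"

definition matroid_circuit :: "real^'e^'r \<Rightarrow> 'e set \<Rightarrow> bool" where
  "matroid_circuit M C \<longleftrightarrow> dependent_cols M C \<and> (\<forall>D. D \<subset> C \<longrightarrow> \<not> dependent_cols M D)"

definition lattice_circuits :: "real^'e^'r \<Rightarrow> (real^'e) set" where
  "lattice_circuits M = {\<gamma> \<in> int_flows M. (\<forall>e. \<gamma> $ e \<in> {-1, 0, 1}) \<and> matroid_circuit M (supp \<gamma>)}"

definition voronoi0 :: "real^'e^'r \<Rightarrow> (real^'e) set" where
  "voronoi0 M = {x \<in> flows M. \<forall>l\<in>int_flows M. norm x \<le> norm (x - l)}"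

definition face_circ :: "real^'e^'r \<Rightarrow> real^'e \<Rightarrow> (real^'e) set" where
  "face_circ M \<gamma> = {x \<in> flows M. 2 * (x \<bullet> \<gamma>) = (norm \<gamma>)\<^sup>2}"

definition face_flow :: "real^'e^'r \<Rightarrow> real^'e \<Rightarrow> (real^'e) set" where
  "face_flow M \<mu> = flows M \<inter>
     \<Inter> {face_circ M \<gamma> | \<gamma>. \<gamma> \<in> lattice_circuits M \<and> supp \<gamma> \<subseteq> supp \<mu> \<and>
                              (\<forall>e\<in>supp \<gamma>. sgn (\<gamma> $ e) = sgn (\<mu> $ e))}"

end

theory Submission imports Defs "Jordan_Normal_Form.Determinant" begin

no_notation vec_index (infixl "$" 100)
no_notation scalar_prod (infix "\<bullet>" 70)

abbreviation dm :: "nat \<Rightarrow> (nat \<Rightarrow> nat \<Rightarrow> real) \<Rightarrow> real mat" where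
  "dm k A \<equiv> mat k k (\<lambda>(i,j). A i j)"

lemma det_fun_eq: "det_fun k A = Determinant.det (dm k A)"
  unfolding det_fun_def Determinant.det_def by (simp add: atLeast0LessThan)

lemma det_fun_cong: "(\<And>i j. i < k \<Longrightarrow> j < k \<Longrightarrow> A i j = B i j) \<Longrightarrow> det_fun k A = det_fun k B"
  unfolding det_fun_eq by (rule arg_cong[of _ _ Determinant.det], rule eq_matI, auto)

lemma det_fun_rows0:
  assumes "i < k" "i' < k" "i \<noteq> i'" "\<And>j. j < k \<Longrightarrow> A i j = A i' j"
  shows "det_fun k A = 0"
  unfolding det_fun_eq
  by (rule det_identical_rows[of _ k i i'], insert assms, auto intro!: eq_vecI)

lemma det_fun_ker0:
  assumes "j0 < k" "x j0 \<noteq> 0" "\<And>i. i < k \<Longrightarrow> (\<Sum>j<k. A i j * x j) = 0"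
  shows "det_fun k A = 0"
  unfolding det_fun_eq
proof (subst det_0_iff_vec_prod_zero[of _ k], simp, intro exI[of _ "Matrix.vec k x"] conjI)
  show "Matrix.vec k x \<in> carrier_vec k" by simp
  show "Matrix.vec k x \<noteq> 0\<^sub>v k" using assms(1,2) by (metis index_vec index_zero_vec(1))
  show "dm k A *\<^sub>v Matrix.vec k x = 0\<^sub>v k"
    by (rule eq_vecI, insert assms(3), auto simp: mult_mat_vec_def scalar_prod_def atLeast0LessThan)
qed

lemma det_fun_laplace:
  "det_fun (Suc n) A = (\<Sum>j<Suc n. A n j * ((-1)^(n+j) * det_fun n (\<lambda>i j'. A i (if j' < j then j' else Suc j'))))"
  unfolding det_fun_eq
  apply (subst laplace_expansion_row[of _ "Suc n" n], simp, simp)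
  apply (rule sum.cong, simp)
  apply (simp add: cofactor_def mat_delete_def)
  apply (rule disjI2, rule arg_cong[of _ _ Determinant.det], rule eq_matI, auto)
  done

lemma det_fun_0: "det_fun 0 A = 1"
  unfolding det_fun_def by simp

definition delc :: "'a list \<Rightarrow> nat \<Rightarrow> 'a list" where
  "delc cs j = take j cs @ drop (Suc j) cs"

lemma delc_nth: "j < length cs \<Longrightarrow> j' < length cs - 1 \<Longrightarrow>
   delc cs j ! j' = cs ! (if j' < j then j' else Suc j')"
  by (auto simp: delc_def nth_append min_def)

lemma delc_len: "j < length cs \<Longrightarrow> length (delc cs j) = length cs - 1"
  by (auto simp: delc_def)

lemma delc_distinct: "distinct cs \<Longrightarrow> distinct (delc cs j)"
  unfolding delc_def by (simp add: set_take_disj_set_drop_if_distinct)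

lemma rows_exist:
  fixes M :: "real^'e^'r"
  assumes "distinct cs"
    and "\<And>x. (\<And>r. (\<Sum>j<length cs. M$r$(cs!j) * x j) = 0) \<Longrightarrow> (\<forall>j<length cs. x j = 0)"
  shows "\<exists>rs. distinct rs \<and> length rs = length cs \<and> det_fun (length cs) (\<lambda>i j. M$(rs!i)$(cs!j)) \<noteq> 0"
  using assms
proof (induction cs rule: rev_induct)
  case Nil then show ?case by (auto simp: det_fun_0)
next
  case (snoc c cs0)
  let ?n = "length cs0"
  let ?cs = "cs0 @ [c]"
  have "\<forall>j<?n. x j = 0" if h: "\<And>r. (\<Sum>j<?n. M$r$(cs0!j) * x j) = 0" for x
  proof -
    let ?x = "\<lambda>j. if j < ?n then x j else 0"
    have hx: "(\<Sum>j<length ?cs. M$r$(?cs!j) * ?x j) = 0" for r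
      using h[of r] by (simp add: nth_append)
    have "\<forall>j<length ?cs. ?x j = 0" by (rule snoc.prems(2)[of ?x], rule hx)
    then show ?thesis by (metis less_SucI length_append_singleton)
  qed
  then obtain rs0 where rs0: "distinct rs0" "length rs0 = ?n"
      "det_fun ?n (\<lambda>i j. M$(rs0!i)$(cs0!j)) \<noteq> 0"
    using snoc.IH snoc.prems(1) by auto
  define cof where "cof j = (-1)^(?n+j) * det_fun ?n (\<lambda>i j'. M$(rs0!i)$(?cs!(if j'<j then j' else Suc j')))" for j
  have D: "det_fun (Suc ?n) (\<lambda>i j. M$((rs0@[r])!i)$(?cs!j)) = (\<Sum>j<Suc ?n. M$r$(?cs!j) * cof j)" for r
  proof -
    have e1: "(rs0@[r])!?n = r" by (metis nth_append_length rs0(2))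
    have e2: "det_fun ?n (\<lambda>i j'. M$((rs0@[r])!i)$(?cs!(if j'<j then j' else Suc j'))) =
       det_fun ?n (\<lambda>i j'. M$(rs0!i)$(?cs!(if j'<j then j' else Suc j')))" for j
      by (rule det_fun_cong) (simp add: nth_append rs0(2))
    show ?thesis unfolding det_fun_laplace cof_def e1 e2 by simp
  qed
  have cofn: "cof ?n \<noteq> 0"
  proof -
    have "cof ?n = det_fun ?n (\<lambda>i j. M$(rs0!i)$(cs0!j))"
      unfolding cof_def by (simp, rule det_fun_cong, simp add: nth_append)
    then show ?thesis using rs0(3) by simp
  qed
  obtain r where r: "det_fun (Suc ?n) (\<lambda>i j. M$((rs0@[r])!i)$(?cs!j)) \<noteq> 0"
  proof (rule ccontr)
    assume "\<not> thesis"
    then have hc: "\<And>r. (\<Sum>j<length ?cs. M$r$(?cs!j) * cof j) = 0" using that D by auto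
    have "\<forall>j<length ?cs. cof j = 0" by (rule snoc.prems(2)[of cof], rule hc)
    then show False using cofn by simp
  qed
  have "r \<notin> set rs0"
  proof
    assume "r \<in> set rs0"
    then obtain i where i: "i < ?n" "rs0!i = r" using rs0(2) by (metis in_set_conv_nth)
    have "det_fun (Suc ?n) (\<lambda>i j. M$((rs0@[r])!i)$(?cs!j)) = 0"
      by (rule det_fun_rows0[of i _ ?n], insert i rs0(2), auto simp: nth_append)
    then show False using r by simp
  qed
  then show ?case using rs0 r by (intro exI[of _ "rs0@[r]"]) auto
qed

lemmas cvec_eq_iff = Finite_Cartesian_Product.vec_eq_iff

lemma flows_iff: "x \<in> flows M \<longleftrightarrow> M *v x = 0" by (simp add: flows_def)

lemma flows_subspace: "subspace (flows M)"
  unfolding flows_def subspace_def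
  by (auto simp: matrix_vector_right_distrib matrix_vector_mult_scaleR)

lemma mv_comp: "(M *v x) $ r = (\<Sum>e\<in>UNIV. M$r$e * x$e)"
  by (simp add: matrix_vector_mult_def)

definition vof :: "'e list \<Rightarrow> (nat \<Rightarrow> real) \<Rightarrow> real^'e::finite" where
  "vof cs x = (\<chi> e. \<Sum>j<length cs. if cs!j = e then x j else 0)"

lemma vof_nth: "distinct cs \<Longrightarrow> j < length cs \<Longrightarrow> vof cs x $ (cs!j) = x j"
proof -
  assume d: "distinct cs" and j: "j < length cs"
  have "vof cs x $ (cs!j) = (\<Sum>j'<length cs. if j' = j then x j' else 0)"
    unfolding vof_def vec_lambda_beta by (rule sum.cong, auto simp: nth_eq_iff_index_eq[OF d] j)
  also have "\<dots> = x j" using j by (simp add: sum.delta)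
  finally show ?thesis .
qed

lemma vof_out: "e \<notin> set cs \<Longrightarrow> vof cs x $ e = 0"
  unfolding vof_def by (auto intro!: sum.neutral)

lemma vof_mult: "(M *v vof cs x) $ r = (\<Sum>j<length cs. M$r$(cs!j) * x j)"
proof -
  have "(M *v vof cs x) $ r = (\<Sum>e\<in>UNIV. \<Sum>j<length cs. M$r$e * (if cs!j = e then x j else 0))"
    unfolding mv_comp vof_def by (simp add: sum_distrib_left)
  also have "\<dots> = (\<Sum>j<length cs. \<Sum>e\<in>UNIV. M$r$e * (if cs!j = e then x j else 0))"
    by (rule sum.swap)
  also have "\<dots> = (\<Sum>j<length cs. M$r$(cs!j) * x j)"
    by (rule sum.cong, simp, simp add: if_distrib cong: if_cong)
  finally show ?thesis .
qed

lemma vof_supp: assumes d: "distinct cs" and s: "supp z \<subseteq> set cs"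
  shows "z = vof cs (\<lambda>j. z$(cs!j))"
proof (subst cvec_eq_iff, intro allI)
  fix e
  show "z $ e = vof cs (\<lambda>j. z $ (cs ! j)) $ e"
  proof (cases "e \<in> set cs")
    case True then obtain j where "j < length cs" "e = cs!j" by (metis in_set_conv_nth)
    then show ?thesis using vof_nth[OF d] by simp
  next
    case False then show ?thesis using s vof_out[OF False] by (auto simp: supp_def)
  qed
qed

lemma mv_list: "distinct cs \<Longrightarrow> supp z \<subseteq> set cs \<Longrightarrow> (M *v z) $ r = (\<Sum>j<length cs. M$r$(cs!j) * z$(cs!j))"
  by (metis vof_supp vof_mult)

lemma circuit_min: "matroid_circuit M C \<Longrightarrow> u \<in> flows M \<Longrightarrow> supp u \<subset> C \<Longrightarrow> u = 0"
  unfolding matroid_circuit_def dependent_cols_def flows_iff by blast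

lemma circuit_min': "matroid_circuit M C \<Longrightarrow> u \<in> flows M \<Longrightarrow> supp u \<subseteq> C \<Longrightarrow> u \<noteq> 0 \<Longrightarrow> supp u = C"
  using circuit_min by blast

lemma supp_eq0: "supp u = {} \<longleftrightarrow> u = 0"
  by (auto simp: supp_def cvec_eq_iff)

lemma circuit_vec:
  fixes M :: "real^'e::finite^'r::finite"
  assumes TU: "totally_unimodular M" and C: "matroid_circuit M C"
  shows "\<exists>w. w \<in> flows M \<and> (\<forall>e. w$e \<in> {-1,0,1}) \<and> supp w = C"
proof -
  from C obtain z where z: "z \<noteq> 0" "M *v z = 0" "supp z \<subseteq> C"
    unfolding matroid_circuit_def dependent_cols_def by blast
  have zC: "supp z = C" using circuit_min'[OF C _ z(3) z(1)] z(2) by (simp add: flows_iff)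
  obtain c0 where c0: "c0 \<in> C" using z(1) zC supp_eq0 by blast
  obtain cs' where cs': "distinct cs'" "set cs' = C - {c0}"
    using finite_distinct_list[of "C - {c0}"] by auto
  define n where "n = length cs'"
  define cs where "cs = cs' @ [c0]"
  have cs: "distinct cs" "set cs = C" "length cs = Suc n" using cs' c0 by (auto simp: cs_def n_def)
  have csn: "cs ! n = c0" "\<And>j. j < n \<Longrightarrow> cs ! j = cs' ! j"
    by (auto simp: cs_def n_def nth_append)
  have indep: "\<forall>j<length cs'. x j = 0" if h: "\<And>r. (\<Sum>j<length cs'. M$r$(cs'!j) * x j) = 0" for x
  proof -
    let ?u = "vof cs' x"
    have "M *v ?u = 0" using h by (simp add: cvec_eq_iff vof_mult)
    moreover have "supp ?u \<subset> C"
    proof -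
      have "supp ?u \<subseteq> set cs'" using vof_out by (auto simp: supp_def)
      then show ?thesis using cs' c0 by auto
    qed
    ultimately have "?u = 0" using circuit_min[OF C] by (simp add: flows_iff)
    then show ?thesis using vof_nth[OF cs'(1)] by (metis zero_index)
  qed
  obtain rs' where rs': "distinct rs'" "length rs' = n"
      "det_fun n (\<lambda>i j. M$(rs'!i)$(cs'!j)) \<noteq> 0"
    using rows_exist[OF cs'(1) indep] n_def by auto
  define cof where "cof j = (-1)^(n+j) * det_fun n (\<lambda>i j'. M$(rs'!i)$(cs!(if j'<j then j' else Suc j')))" for j
  have cof_in: "cof j \<in> {-1,0,1}" if j: "j < Suc n" for j
  proof -
    have "det_fun n (\<lambda>i j'. M$(rs'!i)$(cs!(if j'<j then j' else Suc j'))) =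
          det_fun (length rs') (\<lambda>i j'. M$(rs'!i)$(delc cs j ! j'))"
      using j cs(3) unfolding rs'(2) by (intro det_fun_cong) (simp add: delc_nth)
    moreover have "det_fun (length rs') (\<lambda>i j'. M$(rs'!i)$(delc cs j ! j')) \<in> {-1,0,1}"
    proof -
      have L: "length rs' = length (delc cs j)" using delc_len[of j cs] j cs(3) rs'(2) by simp
      show ?thesis
        using TU rs'(1) delc_distinct[OF cs(1), of j] L unfolding totally_unimodular_def by blast
    qed
    moreover have "(-1::real)^(n+j) \<in> {-1,1}" by (cases "even (n+j)") auto
    ultimately show ?thesis unfolding cof_def by auto
  qed
  have cofn: "cof n \<noteq> 0"
  proof -
    have "cof n = det_fun n (\<lambda>i j. M$(rs'!i)$(cs'!j))"
      unfolding cof_def by (simp, rule det_fun_cong, simp add: csn)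
    then show ?thesis using rs'(3) by simp
  qed
  have D: "det_fun (Suc n) (\<lambda>i j. M$((rs'@[r])!i)$(cs!j)) = (\<Sum>j<Suc n. M$r$(cs!j) * cof j)" for r
  proof -
    have e1: "(rs'@[r])!n = r" by (metis nth_append_length rs'(2))
    have e2: "det_fun n (\<lambda>i j'. M$((rs'@[r])!i)$(cs!(if j'<j then j' else Suc j'))) =
       det_fun n (\<lambda>i j'. M$(rs'!i)$(cs!(if j'<j then j' else Suc j')))" for j
      by (rule det_fun_cong) (simp add: nth_append rs'(2))
    show ?thesis unfolding det_fun_laplace cof_def e1 e2 by simp
  qed
  have D0: "det_fun (Suc n) (\<lambda>i j. M$((rs'@[r])!i)$(cs!j)) = 0" for r
  proof (rule det_fun_ker0[of n _ "\<lambda>j. z$(cs!j)"])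
    show "n < Suc n" by simp
    show "z $ (cs ! n) \<noteq> 0" using c0 zC csn by (auto simp: supp_def)
    fix i assume "i < Suc n"
    have "(\<Sum>j<Suc n. M $ ((rs'@[r])!i) $ (cs ! j) * z $ (cs ! j)) = (M *v z) $ ((rs'@[r])!i)"
      using mv_list[OF cs(1), of z M] zC cs by simp
    then show "(\<Sum>j<Suc n. M $ ((rs'@[r])!i) $ (cs ! j) * z $ (cs ! j)) = 0" using z(2) by simp
  qed
  define w where "w = vof cs cof"
  have wF: "w \<in> flows M"
    unfolding flows_iff w_def using D D0 cs(3) by (simp add: cvec_eq_iff vof_mult)
  have went: "w$e \<in> {-1,0,1}" for e
  proof (cases "e \<in> set cs")
    case True then obtain j where "j < length cs" "e = cs!j" by (metis in_set_conv_nth)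
    then show ?thesis using vof_nth[OF cs(1)] cof_in cs(3) w_def by simp
  next
    case False then show ?thesis using vof_out[OF False] w_def by simp
  qed
  have "w$c0 \<noteq> 0" using vof_nth[OF cs(1), of n cof] cs(3) csn cofn w_def by simp
  then have "w \<noteq> 0" by auto
  moreover have "supp w \<subseteq> C" using vof_out cs(2) w_def by (auto simp: supp_def)
  ultimately have "supp w = C" using circuit_min'[OF C wF] by blast
  then show ?thesis using wF went by blast
qed

definition conf :: "real^'e::finite \<Rightarrow> real^'e \<Rightarrow> bool" where
  "conf g y \<longleftrightarrow> supp g \<subseteq> supp y \<and> (\<forall>e\<in>supp g. sgn (g$e) = sgn (y$e))"

lemma flows_diff: "a \<in> flows M \<Longrightarrow> b \<in> flows M \<Longrightarrow> a - b \<in> flows M"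
  using flows_subspace subspace_diff by blast
lemma flows_add: "a \<in> flows M \<Longrightarrow> b \<in> flows M \<Longrightarrow> a + b \<in> flows M"
  using flows_subspace subspace_add by blast
lemma flows_scale: "a \<in> flows M \<Longrightarrow> c *\<^sub>R a \<in> flows M"
  using flows_subspace subspace_scale by blast
lemma flows_neg: "a \<in> flows M \<Longrightarrow> - a \<in> flows M"
  using flows_subspace subspace_neg by blast
lemma flows_0: "0 \<in> flows M"
  using flows_subspace subspace_0 by blast

lemma circ_1dim:
  assumes C: "matroid_circuit M C" and a: "a \<in> flows M" "supp a \<subseteq> C"
    and b: "b \<in> flows M" "supp b = C"
  shows "\<exists>c. a = c *\<^sub>R b"
proof -
  obtain z where "z \<noteq> 0" "supp z \<subseteq> C" using C unfolding matroid_circuit_def dependent_cols_def by blast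
  then obtain e0 where e0: "e0 \<in> C" using supp_eq0 by blast
  then have b0: "b$e0 \<noteq> 0" using b(2) by (auto simp: supp_def)
  define c where "c = a$e0 / b$e0"
  let ?u = "a - c *\<^sub>R b"
  have uF: "?u \<in> flows M" using a b flows_diff flows_scale by blast
  have "supp ?u \<subseteq> C - {e0}"
    using a(2) b(2) b0 by (auto simp: supp_def c_def)
  then have "supp ?u \<subset> C" using e0 by blast
  then have "?u = 0" using circuit_min[OF C uF] by blast
  then show ?thesis by auto
qed

lemma sign_trans: "(a::real) \<noteq> 0 \<Longrightarrow> p * a \<ge> 0 \<Longrightarrow> a * q \<ge> 0 \<Longrightarrow> p * q \<ge> 0"
  by (auto simp: zero_le_mult_iff)

lemma pm1_Ints: "(x::real) \<in> {-1,0,1} \<Longrightarrow> x \<in> \<int>" by auto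

lemma conf_exists:
  fixes M :: "real^'e::finite^'r::finite"
  assumes TU: "totally_unimodular M" and y: "y \<in> flows M" "y \<noteq> 0"
  shows "\<exists>g\<in>lattice_circuits M. conf g y"
proof -
  define P where "P z \<longleftrightarrow> z \<in> flows M \<and> z \<noteq> 0 \<and> supp z \<subseteq> supp y \<and> (\<forall>e. z$e * y$e \<ge> 0)" for z
  have "P y" using y by (simp add: P_def)
  then obtain z where Pz: "P z" and zmin: "\<And>z'. P z' \<Longrightarrow> card (supp z) \<le> card (supp z')"
    using ex_has_least_nat[of P y "\<lambda>z. card (supp z)"] by blast
  have zF: "z \<in> flows M" and z0: "z \<noteq> 0" and zy: "supp z \<subseteq> supp y" and zs: "\<And>e. z$e * y$e \<ge> 0"
    using Pz by (auto simp: P_def)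
  have circ: "matroid_circuit M (supp z)"
    unfolding matroid_circuit_def
  proof (intro conjI allI impI)
    show "dependent_cols M (supp z)" using zF z0 unfolding dependent_cols_def flows_iff by blast
    fix D assume D: "D \<subset> supp z"
    show "\<not> dependent_cols M D"
    proof
      assume "dependent_cols M D"
      then obtain u0 where u0: "u0 \<noteq> 0" "M *v u0 = 0" "supp u0 \<subseteq> D" unfolding dependent_cols_def by blast
      obtain e1 where e1: "e1 \<in> supp u0" using u0(1) supp_eq0 by blast
      then have e1z: "z$e1 \<noteq> 0" using u0(3) D by (auto simp: supp_def)
      have u0e1: "u0$e1 \<noteq> 0" using e1 by (simp add: supp_def)
      define u where "u = (if u0$e1 * z$e1 > 0 then u0 else - u0)"
      have uF: "u \<in> flows M" using u0(2) flows_neg[of u0 M] by (auto simp: u_def flows_iff)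
      have su: "supp u = supp u0" by (auto simp: u_def supp_def)
      have ue1: "u$e1 * z$e1 > 0"
      proof -
        have "u0$e1 * z$e1 \<noteq> 0" using e1z u0e1 by simp
        then have "u0$e1 * z$e1 > 0 \<or> u0$e1 * z$e1 < 0" by linarith
        then show ?thesis unfolding u_def by (cases "u0$e1 * z$e1 > 0") auto
      qed
      define Ps where "Ps = {e. u$e * z$e > 0}"
      have Psne: "e1 \<in> Ps" using ue1 by (simp add: Ps_def)
      have Psf: "finite Ps" by simp
      define t where "t = Min ((\<lambda>e. z$e / u$e) ` Ps)"
      have "t \<in> (\<lambda>e. z$e / u$e) ` Ps" unfolding t_def
        by (rule Min_in) (use Psf Psne in auto)
      then obtain e2 where e2: "e2 \<in> Ps" "t = z$e2 / u$e2" by auto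
      have tle: "t \<le> z$e / u$e" if "e \<in> Ps" for e
        using that Psf unfolding t_def by (auto intro: Min_le)
      have ratpos: "z$e / u$e > 0" if "e \<in> Ps" for e
        using that unfolding Ps_def by (auto simp: zero_less_mult_iff zero_less_divide_iff)
      have tpos: "t > 0" using e2 ratpos by simp
      define z' where "z' = z - t *\<^sub>R u"
      have z'F: "z' \<in> flows M" using zF uF flows_diff flows_scale z'_def by blast
      have uz: "u$e = 0" if "z$e = 0" for e
        using that su u0(3) D by (auto simp: supp_def)
      have z'e: "z'$e = z$e - t * u$e" for e by (simp add: z'_def)
      have z'z: "z'$e * z$e \<ge> 0" for e
      proof (cases "e \<in> Ps")
        case True
        then have ab: "u$e * z$e > 0" by (simp add: Ps_def)
        then have b0: "u$e \<noteq> 0" by auto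
        have "t * (z$e * u$e) \<le> z$e / u$e * (z$e * u$e)"
          using tle[OF True] ab by (intro mult_right_mono) (auto simp: mult.commute)
        also have "\<dots> = z$e * z$e" using b0 by simp
        finally show ?thesis unfolding z'e by (simp add: algebra_simps)
      next
        case False
        then have "u$e * z$e \<le> 0" by (simp add: Ps_def)
        then have c1: "t * (u$e * z$e) \<le> 0" using tpos by (simp add: mult_nonneg_nonpos)
        have h: "z'$e * z$e = z$e*z$e - t*(u$e*z$e)" unfolding z'e by (simp add: algebra_simps)
        show ?thesis using h c1 zero_le_square[of "z$e"] by linarith
      qed
      have sz': "supp z' \<subseteq> supp z"
      proof (rule subsetI)
        fix e assume "e \<in> supp z'"
        then show "e \<in> supp z" using uz[of e] z'e[of e] by (auto simp: supp_def)
      qed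
      have Pz': "P z'"
        unfolding P_def
      proof (intro conjI allI)
        show "z' \<in> flows M" by (rule z'F)
        obtain e3 where e3: "e3 \<in> supp z" "e3 \<notin> D" using D by blast
        then have "u$e3 = 0" using su u0(3) by (auto simp: supp_def)
        then have "z'$e3 \<noteq> 0" using e3 unfolding z'e by (simp add: supp_def)
        then show "z' \<noteq> 0" by auto
        show "supp z' \<subseteq> supp y" using zy sz' by blast
        fix e show "z'$e * y$e \<ge> 0"
        proof (cases "z$e = 0")
          case True then show ?thesis using uz[OF True] z'e by simp
        next
          case False then show ?thesis using sign_trans[OF False z'z zs] by simp
        qed
      qed
      have "supp z' \<subset> supp z"
      proof
        show "supp z' \<subseteq> supp z" by (rule sz')
        have "e2 \<in> supp z" using e2(1) by (auto simp: Ps_def supp_def)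
        moreover have "u$e2 \<noteq> 0" using e2(1) by (auto simp: Ps_def)
        then have "z'$e2 = 0" unfolding z'e e2(2) by simp
        ultimately show "supp z' \<noteq> supp z" by (auto simp: supp_def)
      qed
      then have "card (supp z') < card (supp z)" by (simp add: psubset_card_mono)
      then show False using zmin[OF Pz'] by simp
    qed
  qed
  obtain w where w: "w \<in> flows M" "\<And>e. w$e \<in> {-1,0,1}" "supp w = supp z"
    using circuit_vec[OF TU circ] by blast
  obtain c where zc: "z = c *\<^sub>R w" using circ_1dim[OF circ zF _ w(1) w(3)] by blast
  define g where "g = (if c > 0 then w else - w)"
  have gF: "g \<in> flows M" using w(1) flows_neg[of w M] by (simp add: g_def)
  have ge: "g$e \<in> {-1,0,1}" for e using w(2)[of e] by (auto simp: g_def)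
  have sg: "supp g = supp z" using w(3) by (auto simp: g_def supp_def)
  have gi: "\<forall>e. g$e \<in> \<int>" using ge pm1_Ints by blast
  have "g \<in> lattice_circuits M"
    unfolding lattice_circuits_def int_flows_def using gF ge sg circ gi by simp
  moreover have "conf g y"
    unfolding conf_def
  proof (intro conjI ballI)
    show "supp g \<subseteq> supp y" using sg zy by simp
    fix e assume e: "e \<in> supp g"
    then have ze: "z$e \<noteq> 0" and ye: "y$e \<noteq> 0" using sg zy by (auto simp: supp_def)
    have "sgn (z$e) = sgn (y$e)" using zs[of e] ze ye
      by (auto simp: sgn_if zero_le_mult_iff)
    moreover have "sgn (g$e) = sgn (z$e)" using zc ze
      by (auto simp: g_def sgn_mult)
    ultimately show "sgn (g$e) = sgn (y$e)" by simp
  qed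
  ultimately show ?thesis by blast
qed

definition l1 :: "real^'e::finite \<Rightarrow> real" where
  "l1 x = (\<Sum>e\<in>UNIV. \<bar>x$e\<bar>)"

lemma l1_nonneg[simp]: "l1 x \<ge> 0" unfolding l1_def by (simp add: sum_nonneg)

lemma l1_zero_iff: "l1 x = 0 \<longleftrightarrow> x = 0"
  unfolding l1_def by (simp add: sum_nonneg_eq_0_iff cvec_eq_iff)

lemma norm2_sum: "(norm x)\<^sup>2 = (\<Sum>e\<in>UNIV. x$e * x$e)"
  by (simp add: power2_norm_eq_inner inner_vec_def)

lemma circ_entries: "g \<in> lattice_circuits M \<Longrightarrow> g$e \<in> {-1,0,1}"
  by (simp add: lattice_circuits_def)

lemma circ_flow: "g \<in> lattice_circuits M \<Longrightarrow> g \<in> flows M"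
  by (simp add: lattice_circuits_def int_flows_def)

lemma circ_int: "g \<in> lattice_circuits M \<Longrightarrow> g \<in> int_flows M"
  by (simp add: lattice_circuits_def)

lemma circ_norm: "g \<in> lattice_circuits M \<Longrightarrow> (norm g)\<^sup>2 = l1 g"
  unfolding norm2_sum l1_def
proof (rule sum.cong)
  fix e assume "g \<in> lattice_circuits M"
  then have "g$e \<in> {-1,0,1}" by (rule circ_entries)
  then show "g$e * g$e = \<bar>g$e\<bar>" by auto
qed simp

lemma circ_nz: "g \<in> lattice_circuits M \<Longrightarrow> g \<noteq> 0"
proof
  assume g: "g \<in> lattice_circuits M" and g0: "g = 0"
  then have "dependent_cols M (supp g)" by (simp add: lattice_circuits_def matroid_circuit_def)
  then obtain x where "x \<noteq> 0" "supp x \<subseteq> supp g" unfolding dependent_cols_def by blast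
  moreover have "supp g = {}" using g0 supp_eq0 by blast
  ultimately show False using supp_eq0 by blast
qed

lemma circ_l1: "g \<in> lattice_circuits M \<Longrightarrow> l1 g \<ge> 1"
proof -
  assume g: "g \<in> lattice_circuits M"
  then obtain e where e: "g$e \<noteq> 0" using circ_nz[OF g] by (metis cvec_eq_iff zero_index)
  then have "\<bar>g$e\<bar> = 1" using circ_entries[OF g, of e] by auto
  moreover have "\<bar>g$e\<bar> \<le> l1 g" unfolding l1_def by (rule member_le_sum) auto
  ultimately show ?thesis by simp
qed

lemma int_abs_ge1: assumes "(x::real) \<in> \<int>" "x \<noteq> 0" shows "\<bar>x\<bar> \<ge> 1"
proof -
  from assms(1) obtain k where k: "x = of_int k" by (auto elim: Ints_cases)
  then have "k \<noteq> 0" using assms(2) by auto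
  then have "\<bar>k\<bar> \<ge> 1" by linarith
  then show ?thesis using k by (metis of_int_1_le_iff of_int_abs)
qed

lemma int_abs_le_sq: "(x::real) \<in> \<int> \<Longrightarrow> \<bar>x\<bar> \<le> x * x"
proof (cases "x = 0")
  case False
  assume "x \<in> \<int>"
  then have "\<bar>x\<bar> \<ge> 1" using False int_abs_ge1 by blast
  then have "\<bar>x\<bar> * 1 \<le> \<bar>x\<bar> * \<bar>x\<bar>" by (intro mult_left_mono) auto
  then show ?thesis by (simp add: abs_mult_self_eq)
qed simp

lemma int_l1_le: "\<forall>e. x$e \<in> \<int> \<Longrightarrow> l1 x \<le> (norm x)\<^sup>2"
  unfolding norm2_sum l1_def by (rule sum_mono) (simp add: int_abs_le_sq)

lemma vor_iff: "x \<in> voronoi0 M \<longleftrightarrow> x \<in> flows M \<and> (\<forall>l\<in>int_flows M. 2 * (x \<bullet> l) \<le> (norm l)\<^sup>2)"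
proof -
  have "norm x \<le> norm (x - l) \<longleftrightarrow> 2 * (x \<bullet> l) \<le> (norm l)\<^sup>2" for l
  proof -
    have "norm x \<le> norm (x - l) \<longleftrightarrow> x \<bullet> x \<le> (x - l) \<bullet> (x - l)" by (rule norm_le)
    also have "(x - l) \<bullet> (x - l) = x \<bullet> x - 2 * (x \<bullet> l) + l \<bullet> l"
      by (simp add: inner_diff_left inner_diff_right inner_commute)
    finally show ?thesis by (simp add: power2_norm_eq_inner)
  qed
  then show ?thesis unfolding voronoi0_def by auto
qed

lemma conf_trans: "conf a b \<Longrightarrow> conf b c \<Longrightarrow> conf a c"
  unfolding conf_def by (auto simp: supp_def)

lemma circ_sgn: "g \<in> lattice_circuits M \<Longrightarrow> conf g y \<Longrightarrow> g$e \<noteq> 0 \<Longrightarrow> g$e = sgn (y$e)"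
proof -
  assume g: "g \<in> lattice_circuits M" and c: "conf g y" and e: "g$e \<noteq> 0"
  then have "sgn (g$e) = sgn (y$e)" unfolding conf_def by (auto simp: supp_def)
  moreover have "sgn (g$e) = g$e" using circ_entries[OF g, of e] e by auto
  ultimately show ?thesis by simp
qed

lemma conf_sub:
  assumes l: "l \<in> int_flows M" and g: "g \<in> lattice_circuits M" and c: "conf g l"
  shows "l - g \<in> int_flows M" "l1 (l - g) = l1 l - l1 g" "conf (l - g) l"
proof -
  have lF: "l \<in> flows M" and li: "\<And>e. l$e \<in> \<int>" using l by (auto simp: int_flows_def)
  have gF: "g \<in> flows M" using circ_flow[OF g] .
  have gi: "\<And>e. g$e \<in> \<int>" using circ_entries[OF g] pm1_Ints by blast
  show "l - g \<in> int_flows M" unfolding int_flows_def using flows_diff[OF lF gF] li gi by auto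
  have coord: "\<bar>l$e - g$e\<bar> = \<bar>l$e\<bar> - \<bar>g$e\<bar> \<and> (l$e - g$e \<noteq> 0 \<longrightarrow> l$e \<noteq> 0 \<and> sgn (l$e - g$e) = sgn (l$e))" for e
  proof (cases "g$e = 0")
    case False
    then have ge: "g$e = sgn (l$e)" by (rule circ_sgn[OF g c])
    have le: "l$e \<noteq> 0" using False c unfolding conf_def by (auto simp: supp_def)
    then have "\<bar>l$e\<bar> \<ge> 1" using int_abs_ge1 li by blast
    then show ?thesis using ge le by (cases "l$e > 0") (auto simp: sgn_if)
  qed simp
  show "l1 (l - g) = l1 l - l1 g" unfolding l1_def using coord by (simp add: sum_subtractf)
  show "conf (l - g) l" unfolding conf_def using coord by (auto simp: supp_def)
qed

lemma K_lemma:
  fixes M :: "real^'e::finite^'r::finite"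
  assumes TU: "totally_unimodular M" and x: "x \<in> flows M"
    and h: "\<And>g. g \<in> lattice_circuits M \<Longrightarrow> 2 * (x \<bullet> g) \<le> l1 g"
    and l: "l \<in> int_flows M"
  shows "2 * (x \<bullet> l) \<le> l1 l"
proof -
  have "\<forall>l\<in>int_flows M. l1 l \<le> real n \<longrightarrow> 2 * (x \<bullet> l) \<le> l1 l" for n
  proof (induction n)
    case 0
    show ?case
    proof (intro ballI impI)
      fix l :: "real^'e" assume "l1 l \<le> real 0"
      then have "l = 0" using l1_nonneg[of l] l1_zero_iff[of l] by simp
      then show "2 * (x \<bullet> l) \<le> l1 l" by simp
    qed
  next
    case (Suc n)
    show ?case
    proof (intro ballI impI)
      fix l :: "real^'e" assume l: "l \<in> int_flows M" and ln: "l1 l \<le> real (Suc n)"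
      show "2 * (x \<bullet> l) \<le> l1 l"
      proof (cases "l = 0")
        case True then show ?thesis by simp
      next
        case False
        have lF: "l \<in> flows M" using l by (simp add: int_flows_def)
        obtain g where g: "g \<in> lattice_circuits M" "conf g l" using conf_exists[OF TU lF False] by blast
        note cs = conf_sub[OF l g]
        have "l1 (l - g) \<le> real n" using cs(2) circ_l1[OF g(1)] ln by simp
        then have "2 * (x \<bullet> (l - g)) \<le> l1 (l - g)" using Suc.IH cs(1) by blast
        moreover have "2 * (x \<bullet> g) \<le> l1 g" using h g(1) by blast
        ultimately show ?thesis using cs(2) by (simp add: inner_diff_right)
      qed
    qed
  qed
  moreover obtain n :: nat where "l1 l \<le> real n" using real_arch_simple by blast
  ultimately show ?thesis using l by blast
qed

lemma orth_conf:
  fixes M :: "real^'e::finite^'r::finite"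
  assumes TU: "totally_unimodular M"
  shows "y \<in> flows M \<Longrightarrow> (\<And>g. g \<in> lattice_circuits M \<Longrightarrow> conf g y \<Longrightarrow> d \<bullet> g = 0) \<Longrightarrow> d \<bullet> y = 0"
proof (induction "card (supp y)" arbitrary: y rule: less_induct)
  case less
  show ?case
  proof (cases "y = 0")
    case True then show ?thesis by simp
  next
    case False
    obtain g where g: "g \<in> lattice_circuits M" "conf g y" using conf_exists[OF TU less.prems(1) False] by blast
    have sg: "supp g \<noteq> {}" using circ_nz[OF g(1)] supp_eq0 by blast
    define t where "t = Min ((\<lambda>e. \<bar>y$e\<bar>) ` supp g)"
    have "t \<in> (\<lambda>e. \<bar>y$e\<bar>) ` supp g" unfolding t_def by (rule Min_in) (use sg in auto)
    then obtain e0 where e0: "e0 \<in> supp g" "t = \<bar>y$e0\<bar>" by auto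
    have tle: "t \<le> \<bar>y$e\<bar>" if "e \<in> supp g" for e unfolding t_def using that by (auto intro: Min_le)
    have gy: "supp g \<subseteq> supp y" using g(2) by (simp add: conf_def)
    define y' where "y' = y - t *\<^sub>R g"
    have y'F: "y' \<in> flows M" using less.prems(1) circ_flow[OF g(1)] flows_diff flows_scale y'_def by blast
    have coord: "(y'$e \<noteq> 0 \<longrightarrow> y$e \<noteq> 0 \<and> sgn (y'$e) = sgn (y$e))" for e
    proof (cases "g$e = 0")
      case True then show ?thesis by (simp add: y'_def)
    next
      case False
      then have ge: "g$e = sgn (y$e)" by (rule circ_sgn[OF g])
      have ye: "y$e \<noteq> 0" using False gy by (auto simp: supp_def)
      have "t \<le> \<bar>y$e\<bar>" using tle False by (simp add: supp_def)
      then show ?thesis using ye ge by (cases "y$e > 0") (auto simp: y'_def sgn_if)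
    qed
    have c': "conf y' y" unfolding conf_def using coord by (auto simp: supp_def)
    have "y'$e0 = 0"
    proof -
      have "g$e0 \<noteq> 0" using e0 by (simp add: supp_def)
      then have "g$e0 = sgn (y$e0)" by (rule circ_sgn[OF g])
      then show ?thesis using e0(2) by (simp add: y'_def sgn_if)
    qed
    moreover have "e0 \<in> supp y" using e0(1) gy by blast
    ultimately have "supp y' \<subset> supp y" using c' unfolding conf_def by (auto simp: supp_def)
    then have "card (supp y') < card (supp y)" by (simp add: psubset_card_mono)
    moreover have "d \<bullet> g' = 0" if "g' \<in> lattice_circuits M" "conf g' y'" for g'
      using less.prems(2) that conf_trans[OF that(2) c'] by blast
    ultimately have "d \<bullet> y' = 0" using less.hyps y'F by blast
    moreover have "d \<bullet> g = 0" using less.prems(2) g by blast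
    ultimately show ?thesis by (simp add: y'_def inner_diff_right)
  qed
qed

lemma circ_finite: "finite (lattice_circuits M)"
proof -
  have "lattice_circuits M \<subseteq> vec_lambda ` (PiE UNIV (\<lambda>_. {-1,0,1::real}))"
  proof
    fix g assume g: "g \<in> lattice_circuits M"
    have "(\<lambda>e. g$e) \<in> PiE UNIV (\<lambda>_. {-1,0,1::real})" using circ_entries[OF g] by (auto simp: PiE_iff)
    then show "g \<in> vec_lambda ` (PiE UNIV (\<lambda>_. {-1,0,1::real}))" by (metis image_eqI vec_lambda_eta)
  qed
  moreover have "finite (PiE (UNIV::'a set) (\<lambda>_. {-1,0,1::real}))" by (intro finite_PiE) auto
  ultimately show ?thesis by (meson finite_imageI finite_subset)
qed

lemma proj_exists:
  obtains p q where "p \<in> flows M" "\<And>w. w \<in> flows M \<Longrightarrow> q \<bullet> w = 0" "x = p + q"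
proof -
  have sp: "span (flows M) = flows M" using flows_subspace by simp
  obtain p q where "p \<in> span (flows M)" "\<And>w. w \<in> span (flows M) \<Longrightarrow> q \<bullet> w = 0" "x = p + q"
    using orthogonal_subspace_decomp_exists[of "flows M" x] by (metis real_inner_class.orthogonal_def)
  then show ?thesis using that sp by auto
qed

lemma face_flow_iff: "x \<in> face_flow M \<mu> \<longleftrightarrow>
   x \<in> flows M \<and> (\<forall>g\<in>lattice_circuits M. conf g \<mu> \<longrightarrow> 2 * (x \<bullet> g) = (norm g)\<^sup>2)"
  unfolding face_flow_def face_circ_def conf_def by blast

lemma supp_add: "supp (x + y) \<subseteq> supp x \<union> supp y" by (auto simp: supp_def)
lemma supp_scale: "supp (c *\<^sub>R x) \<subseteq> supp x" by (auto simp: supp_def)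

lemma supp_subspace: "subspace {x \<in> flows M. supp x \<subseteq> S}"
  unfolding subspace_def
proof (intro conjI ballI allI)
  show "0 \<in> {x \<in> flows M. supp x \<subseteq> S}" using flows_0 by (simp add: supp_def)
  fix x y assume "x \<in> {x \<in> flows M. supp x \<subseteq> S}" "y \<in> {x \<in> flows M. supp x \<subseteq> S}"
  then show "x + y \<in> {x \<in> flows M. supp x \<subseteq> S}" using flows_add supp_add by blast
next
  fix c x assume "x \<in> {x \<in> flows M. supp x \<subseteq> S}"
  then show "c *\<^sub>R x \<in> {x \<in> flows M. supp x \<subseteq> S}" using flows_scale supp_scale by blast
qed

lemma flows_in_supp:
  assumes g: "genus_flow M \<mu> = genus_matroid M" and y: "y \<in> flows M"
  shows "supp y \<subseteq> supp \<mu>"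
proof -
  have "{x \<in> flows M. supp x \<subseteq> supp \<mu>} = flows M"
    by (rule subspace_dim_equal[OF supp_subspace flows_subspace])
       (use g in \<open>auto simp: genus_flow_def genus_matroid_def\<close>)
  then show ?thesis using y by blast
qed

lemma sgn_le_abs: "sgn (a::real) * b \<le> \<bar>b\<bar>"
  by (cases "a > 0"; cases "a < 0") (auto simp: sgn_if)

lemma avg_eq:
  fixes A B n u :: real
  assumes "A \<le> n" "B \<le> n" "0 < u" "u < 1" "(1 - u) * A + u * B = n"
  shows "A = n"
proof (rule ccontr)
  assume "A \<noteq> n"
  then have "A < n" using assms by simp
  then have "(1 - u) * A < (1 - u) * n" using assms by (intro mult_strict_left_mono) auto
  moreover have "u * B \<le> u * n" using assms by (intro mult_left_mono) auto
  ultimately have "(1 - u) * A + u * B < (1 - u) * n + u * n" by linarith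
  then show False using assms(5) by (simp add: algebra_simps)
qed

lemma fwd:
  fixes M :: "real^'e::finite^'r::finite"
  assumes TU: "totally_unimodular M" and mu: "\<mu> \<in> int_flows M"
    and gen: "genus_flow M \<mu> = genus_matroid M"
  shows "\<exists>v. face_flow M \<mu> = {v} \<and> v extreme_point_of voronoi0 M"
proof -
  have muF: "\<mu> \<in> flows M" and mui: "\<And>e. \<mu>$e \<in> \<int>" using mu by (auto simp: int_flows_def)
  have Sfull: "\<And>y. y \<in> flows M \<Longrightarrow> supp y \<subseteq> supp \<mu>" using flows_in_supp[OF gen] by blast
  define w :: "real^'e" where "w = (\<chi> e. sgn (\<mu>$e) / 2)"
  obtain x q where x: "x \<in> flows M" and q: "\<And>y. y \<in> flows M \<Longrightarrow> q \<bullet> y = 0" and wxq: "w = x + q"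
    using proj_exists by blast
  have xw: "2 * (x \<bullet> y) = (\<Sum>e\<in>UNIV. sgn (\<mu>$e) * y$e)" if "y \<in> flows M" for y
  proof -
    have "x \<bullet> y = w \<bullet> y" using q[OF that] wxq by (simp add: inner_add_left)
    also have "\<dots> = (\<Sum>e\<in>UNIV. sgn (\<mu>$e) / 2 * y$e)" by (simp add: w_def inner_vec_def)
    finally show ?thesis by (simp add: sum_distrib_left)
  qed
  have xface: "x \<in> face_flow M \<mu>"
    unfolding face_flow_iff
  proof (intro conjI ballI impI)
    show "x \<in> flows M" by (rule x)
    fix g assume g: "g \<in> lattice_circuits M" and c: "conf g \<mu>"
    have "2 * (x \<bullet> g) = (\<Sum>e\<in>UNIV. sgn (\<mu>$e) * g$e)" using xw circ_flow[OF g] by blast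
    also have "\<dots> = l1 g" unfolding l1_def
    proof (rule sum.cong)
      fix e show "sgn (\<mu>$e) * g$e = \<bar>g$e\<bar>"
      proof (cases "g$e = 0")
        case False then have "g$e = sgn (\<mu>$e)" by (rule circ_sgn[OF g c])
        then show ?thesis using False by (auto simp: sgn_if)
      qed simp
    qed simp
    finally show "2 * (x \<bullet> g) = (norm g)\<^sup>2" using circ_norm[OF g] by simp
  qed
  have xvor: "x \<in> voronoi0 M"
    unfolding vor_iff
  proof (intro conjI ballI)
    show "x \<in> flows M" by (rule x)
    fix l assume l: "l \<in> int_flows M"
    have "2 * (x \<bullet> l) = (\<Sum>e\<in>UNIV. sgn (\<mu>$e) * l$e)" using xw l by (simp add: int_flows_def)
    also have "\<dots> \<le> l1 l" unfolding l1_def by (rule sum_mono) (rule sgn_le_abs)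
    also have "\<dots> \<le> (norm l)\<^sup>2" using l by (intro int_l1_le) (simp add: int_flows_def)
    finally show "2 * (x \<bullet> l) \<le> (norm l)\<^sup>2" .
  qed
  have uniq: "x' = x" if x': "x' \<in> face_flow M \<mu>" for x'
  proof -
    define d where "d = x' - x"
    have x'F: "x' \<in> flows M" using x' face_flow_iff by blast
    have dF: "d \<in> flows M" using flows_diff[OF x'F x] d_def by simp
    have dg: "d \<bullet> g = 0" if "g \<in> lattice_circuits M" "conf g \<mu>" for g
    proof -
      have "2 * (x' \<bullet> g) = (norm g)\<^sup>2" "2 * (x \<bullet> g) = (norm g)\<^sup>2"
        using x' xface that unfolding face_flow_iff by blast+
      then show ?thesis by (simp add: d_def inner_diff_left)
    qed
    have dmu: "d \<bullet> \<mu> = 0" by (rule orth_conf[OF TU muF dg])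
    define N where "N = l1 d + 1"
    define y where "y = N *\<^sub>R \<mu> + d"
    have yF: "y \<in> flows M" unfolding y_def by (intro flows_add flows_scale muF dF)
    have cy: "conf y \<mu>"
      unfolding conf_def
    proof (intro conjI ballI)
      show sy: "supp y \<subseteq> supp \<mu>" using Sfull[OF yF] .
      fix e assume e: "e \<in> supp y"
      then have me: "\<mu>$e \<noteq> 0" using sy by (auto simp: supp_def)
      then have m1: "\<bar>\<mu>$e\<bar> \<ge> 1" using int_abs_ge1 mui by blast
      have de: "\<bar>d$e\<bar> \<le> l1 d" unfolding l1_def by (rule member_le_sum) auto
      have Npos: "N > 0" using l1_nonneg[of d] unfolding N_def by linarith
      have "N * \<bar>\<mu>$e\<bar> \<ge> N * 1" using m1 Npos by (intro mult_left_mono) auto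
      then have big: "N * \<bar>\<mu>$e\<bar> > \<bar>d$e\<bar>" using de N_def by simp
      have ye: "y$e = N * \<mu>$e + d$e" by (simp add: y_def)
      show "sgn (y$e) = sgn (\<mu>$e)"
      proof (cases "\<mu>$e > 0")
        case True then have "y$e > 0" using big ye by (simp add: abs_if split: if_splits)
        then show ?thesis using True by simp
      next
        case False then have "\<mu>$e < 0" using me by simp
        then have "y$e < 0" using big ye Npos by (simp add: abs_if mult_less_0_iff split: if_splits)
        then show ?thesis using \<open>\<mu>$e < 0\<close> by simp
      qed
    qed
    have "d \<bullet> y = 0"
      by (rule orth_conf[OF TU yF]) (use dg conf_trans cy in blast)
    then have "d \<bullet> d = 0" using dmu by (simp add: y_def inner_add_right)
    then show ?thesis using d_def by simp
  qed
  have ff: "face_flow M \<mu> = {x}" using xface uniq by blast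
  have "x extreme_point_of voronoi0 M"
    unfolding extreme_point_of_def
  proof (intro conjI ballI notI)
    show "x \<in> voronoi0 M" by (rule xvor)
    fix a b assume a: "a \<in> voronoi0 M" and b: "b \<in> voronoi0 M" and xs: "x \<in> open_segment a b"
    have xab: "x \<noteq> a" using xs by (auto simp: open_segment_def)
    obtain u where u: "0 < u" "u < 1" "x = (1 - u) *\<^sub>R a + u *\<^sub>R b" using xs by (auto simp: in_segment)
    have aF: "a \<in> flows M" using a vor_iff by blast
    have "a \<in> face_flow M \<mu>"
      unfolding face_flow_iff
    proof (intro conjI ballI impI)
      show "a \<in> flows M" by (rule aF)
      fix g assume g: "g \<in> lattice_circuits M" and c: "conf g \<mu>"
      have A: "2 * (a \<bullet> g) \<le> (norm g)\<^sup>2" using a circ_int[OF g] vor_iff by blast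
      have B: "2 * (b \<bullet> g) \<le> (norm g)\<^sup>2" using b circ_int[OF g] vor_iff by blast
      have X: "2 * (x \<bullet> g) = (norm g)\<^sup>2" using xface g c face_flow_iff by blast
      have "(1 - u) * (2 * (a \<bullet> g)) + u * (2 * (b \<bullet> g)) = 2 * (x \<bullet> g)"
        unfolding u(3) by (simp add: inner_add_left algebra_simps)
      then show "2 * (a \<bullet> g) = (norm g)\<^sup>2" using avg_eq[OF A B u(1) u(2)] X by simp
    qed
    then show False using uniq xab by blast
  qed
  then show ?thesis using ff by blast
qed

lemma bwd:
  fixes M :: "real^'e::finite^'r::finite"
  assumes TU: "totally_unimodular M" and ext: "v extreme_point_of voronoi0 M"
  shows "\<exists>\<mu>\<in>int_flows M. genus_flow M \<mu> = genus_matroid M \<and> face_flow M \<mu> = {v}"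
proof -
  have vV: "v \<in> voronoi0 M" using ext by (simp add: extreme_point_of_def)
  have vF: "v \<in> flows M" using vV vor_iff by blast
  have hv: "2 * (v \<bullet> g) \<le> l1 g" if "g \<in> lattice_circuits M" for g
    using vV vor_iff circ_int[OF that] circ_norm[OF that] by metis
  have Kv: "2 * (v \<bullet> l) \<le> l1 l" if "l \<in> int_flows M" for l
    by (rule K_lemma[OF TU vF hv that])
  define T where "T = {g \<in> lattice_circuits M. 2 * (v \<bullet> g) = l1 g}"
  have Tsub: "T \<subseteq> lattice_circuits M" by (auto simp: T_def)
  have Tfin: "finite T" using circ_finite finite_subset Tsub by blast
  have E: "d = 0" if dF: "d \<in> flows M" and dT: "\<And>g. g \<in> T \<Longrightarrow> d \<bullet> g = 0" for d
  proof (rule ccontr)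
    assume d0: "d \<noteq> 0"
    define NT where "NT = lattice_circuits M - T"
    have NTfin: "finite NT" unfolding NT_def by (rule finite_Diff[OF circ_finite])
    define sl where "sl g = l1 g - 2 * (v \<bullet> g)" for g
    have slpos: "sl g > 0" if "g \<in> NT" for g
      using that hv[of g] by (auto simp: NT_def T_def sl_def)
    define eps where "eps = Min (insert 1 ((\<lambda>g. sl g / (2 * \<bar>d \<bullet> g\<bar> + 1)) ` NT))"
    have epsin: "eps \<in> insert 1 ((\<lambda>g. sl g / (2 * \<bar>d \<bullet> g\<bar> + 1)) ` NT)"
      unfolding eps_def by (rule Min_in) (use NTfin in auto)
    have epspos: "eps > 0"
    proof -
      have "z > 0" if "z \<in> insert 1 ((\<lambda>g. sl g / (2 * \<bar>d \<bullet> g\<bar> + 1)) ` NT)" for z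
      proof -
        have "sl g / (2 * \<bar>d \<bullet> g\<bar> + 1) > 0" if "g \<in> NT" for g
          using slpos[OF that] by (intro divide_pos_pos) auto
        then show ?thesis using that by auto
      qed
      then show ?thesis using epsin by blast
    qed
    have epsle: "eps \<le> sl g / (2 * \<bar>d \<bullet> g\<bar> + 1)" if "g \<in> NT" for g
      unfolding eps_def using that NTfin by (intro Min_le) auto
    have inV: "v + t *\<^sub>R d \<in> voronoi0 M" if t: "\<bar>t\<bar> \<le> eps" for t
    proof -
      have xF: "v + t *\<^sub>R d \<in> flows M" using flows_add[OF vF flows_scale[OF dF]] by simp
      have hx: "2 * ((v + t *\<^sub>R d) \<bullet> g) \<le> l1 g" if g: "g \<in> lattice_circuits M" for g
      proof (cases "g \<in> T")
        case True
        then show ?thesis using dT[OF True] by (simp add: T_def inner_add_left)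
      next
        case False
        then have gN: "g \<in> NT" using g by (simp add: NT_def)
        have a: "eps * (2 * \<bar>d \<bullet> g\<bar> + 1) \<le> sl g"
          using epsle[OF gN] by (simp add: pos_le_divide_eq add_pos_nonneg)
        have b: "t * (d \<bullet> g) \<le> eps * \<bar>d \<bullet> g\<bar>"
        proof -
          have "t * (d \<bullet> g) \<le> \<bar>t\<bar> * \<bar>d \<bullet> g\<bar>" by (metis abs_ge_self abs_mult)
          also have "\<dots> \<le> eps * \<bar>d \<bullet> g\<bar>" using t by (intro mult_right_mono) auto
          finally show ?thesis .
        qed
        have "2 * ((v + t *\<^sub>R d) \<bullet> g) = 2 * (v \<bullet> g) + 2 * (t * (d \<bullet> g))"
          by (simp add: inner_add_left algebra_simps)
        also have "\<dots> \<le> 2 * (v \<bullet> g) + sl g" using a b epspos by (simp add: algebra_simps)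
        also have "\<dots> = l1 g" by (simp add: sl_def)
        finally show ?thesis .
      qed
      show ?thesis unfolding vor_iff
      proof (intro conjI ballI)
        show "v + t *\<^sub>R d \<in> flows M" by (rule xF)
        fix l assume l: "l \<in> int_flows M"
        have "2 * ((v + t *\<^sub>R d) \<bullet> l) \<le> l1 l" by (rule K_lemma[OF TU xF hx l])
        also have "\<dots> \<le> (norm l)\<^sup>2" using l by (intro int_l1_le) (simp add: int_flows_def)
        finally show "2 * ((v + t *\<^sub>R d) \<bullet> l) \<le> (norm l)\<^sup>2" .
      qed
    qed
    let ?a = "v + (- eps) *\<^sub>R d" and ?b = "v + eps *\<^sub>R d"
    have aV: "?a \<in> voronoi0 M" using inV[of "- eps"] epspos by simp
    have bV: "?b \<in> voronoi0 M" using inV[of eps] epspos by simp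
    have "?a \<noteq> ?b"
    proof
      assume "?a = ?b"
      then have h: "(-eps) *\<^sub>R d = eps *\<^sub>R d" by simp
      have "(eps - (-eps)) *\<^sub>R d = eps *\<^sub>R d - (-eps) *\<^sub>R d" by (rule scaleR_diff_left)
      also have "\<dots> = 0" using h by simp
      finally have "(eps - (-eps)) *\<^sub>R d = 0" .
      then have "eps - (-eps) = 0 \<or> d = 0" by (simp only: scaleR_eq_0_iff)
      then show False using d0 epspos by auto
    qed
    then have "midpoint ?a ?b \<in> open_segment ?a ?b" by simp
    moreover have "midpoint ?a ?b = v" unfolding midpoint_def cvec_eq_iff by (simp add: field_simps)
    ultimately show False using ext aV bV unfolding extreme_point_of_def by metis
  qed
  have cons: "g1$e = g2$e" if g1: "g1 \<in> T" and g2: "g2 \<in> T" and e1: "g1$e \<noteq> 0" and e2: "g2$e \<noteq> 0" for g1 g2 e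
  proof (rule ccontr)
    assume ne: "g1$e \<noteq> g2$e"
    have g1c: "g1 \<in> lattice_circuits M" and g2c: "g2 \<in> lattice_circuits M" using g1 g2 Tsub by auto
    have opp: "g1$e + g2$e = 0" using circ_entries[OF g1c, of e] circ_entries[OF g2c, of e] e1 e2 ne by auto
    define l where "l = g1 + g2"
    have lL: "l \<in> int_flows M" using circ_int[OF g1c] circ_int[OF g2c] flows_add
      by (auto simp: l_def int_flows_def)
    have "l1 l \<le> (\<Sum>f\<in>UNIV. \<bar>g1$f\<bar> + \<bar>g2$f\<bar> - (if f = e then 2 else 0))"
      unfolding l1_def l_def
    proof (rule sum_mono)
      fix f show "\<bar>(g1 + g2)$f\<bar> \<le> \<bar>g1$f\<bar> + \<bar>g2$f\<bar> - (if f = e then 2 else 0)"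
      proof (cases "f = e")
        case True
        have "\<bar>g1$e\<bar> = 1" "\<bar>g2$e\<bar> = 1" using circ_entries[OF g1c, of e] circ_entries[OF g2c, of e] e1 e2 by auto
        then show ?thesis using True opp by simp
      qed (simp add: abs_triangle_ineq)
    qed
    also have "\<dots> = l1 g1 + l1 g2 - 2" unfolding l1_def by (simp add: sum.distrib sum_subtractf)
    finally have "l1 l \<le> l1 g1 + l1 g2 - 2" .
    moreover have "2 * (v \<bullet> l) = l1 g1 + l1 g2" using g1 g2 by (simp add: T_def l_def inner_add_right)
    ultimately show False using Kv[OF lL] by simp
  qed
  have sgnex: "\<exists>s\<in>{-1,1::real}. \<forall>g\<in>T. g$e = 0 \<or> g$e = s" for e
  proof (cases "\<exists>g\<in>T. g$e \<noteq> 0")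
    case True
    then obtain g0 where g0: "g0 \<in> T" "g0$e \<noteq> 0" by blast
    then have "g0$e \<in> {-1,1}" using circ_entries[of g0 M e] Tsub by auto
    then show ?thesis using cons g0 by blast
  next
    case False then show ?thesis by auto
  qed
  define mu where "mu = (\<Sum>g\<in>T. g)"
  have mue: "mu$e = (\<Sum>g\<in>T. g$e)" for e by (simp add: mu_def)
  have muF: "mu \<in> flows M" unfolding mu_def
    by (rule subspace_sum[OF flows_subspace]) (use Tsub circ_flow in blast)
  have muL: "mu \<in> int_flows M"
  proof -
    have "mu$e \<in> \<int>" for e
      unfolding mue by (rule Ints_sum) (use Tsub circ_entries pm1_Ints in blast)
    then show ?thesis using muF by (simp add: int_flows_def)
  qed
  have muabs: "\<bar>mu$e\<bar> = (\<Sum>g\<in>T. \<bar>g$e\<bar>)" and musgn: "\<And>g. g \<in> T \<Longrightarrow> g$e \<noteq> 0 \<Longrightarrow> sgn (mu$e) = sgn (g$e)" for e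
  proof -
    obtain s where s: "s \<in> {-1,1::real}" "\<And>g. g \<in> T \<Longrightarrow> g$e = 0 \<or> g$e = s" using sgnex[of e] by blast
    have gs: "g$e = s * \<bar>g$e\<bar>" if "g \<in> T" for g using s(1) s(2)[OF that] by auto
    have m: "mu$e = s * (\<Sum>g\<in>T. \<bar>g$e\<bar>)" unfolding mue sum_distrib_left by (rule sum.cong) (use gs in auto)
    have nn: "(\<Sum>g\<in>T. \<bar>g$e\<bar>) \<ge> 0" by (simp add: sum_nonneg)
    show "\<bar>mu$e\<bar> = (\<Sum>g\<in>T. \<bar>g$e\<bar>)" using m s(1) nn by (auto simp: abs_mult)
    fix g assume g: "g \<in> T" "g$e \<noteq> 0"
    have "\<bar>g$e\<bar> \<le> (\<Sum>g\<in>T. \<bar>g$e\<bar>)" using g Tfin by (intro member_le_sum) auto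
    then have pos: "(\<Sum>g\<in>T. \<bar>g$e\<bar>) > 0" using g by simp
    have "g$e = s" using s(2)[OF g(1)] g(2) by simp
    then show "sgn (mu$e) = sgn (g$e)" using m pos s(1) by (auto simp: sgn_mult)
  qed
  have Tconf: "conf g mu" if g: "g \<in> T" for g
    unfolding conf_def
  proof (intro conjI ballI)
    show "supp g \<subseteq> supp mu"
    proof
      fix e assume e: "e \<in> supp g"
      then have "sgn (mu$e) = sgn (g$e)" using musgn g by (simp add: supp_def)
      then show "e \<in> supp mu" using e unfolding supp_def by (metis (mono_tags) mem_Collect_eq sgn_0_0)
    qed
    fix e assume "e \<in> supp g" then show "sgn (g$e) = sgn (mu$e)" using musgn g by (simp add: supp_def)
  qed
  have l1mu: "l1 mu = (\<Sum>g\<in>T. l1 g)"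
    unfolding l1_def muabs by (rule sum.swap)
  have vmu: "2 * (v \<bullet> mu) = l1 mu"
  proof -
    have "2 * (v \<bullet> mu) = (\<Sum>g\<in>T. 2 * (v \<bullet> g))" by (simp add: mu_def inner_sum_right sum_distrib_left)
    also have "\<dots> = (\<Sum>g\<in>T. l1 g)" by (rule sum.cong) (auto simp: T_def)
    finally show ?thesis using l1mu by simp
  qed
  have confT: "g \<in> T" if g: "g \<in> lattice_circuits M" and c: "conf g mu" for g
  proof -
    note cs = conf_sub[OF muL g c]
    have "2 * (v \<bullet> (mu - g)) \<le> l1 mu - l1 g" using Kv[OF cs(1)] cs(2) by simp
    then have "2 * (v \<bullet> g) \<ge> l1 g" using vmu by (simp add: inner_diff_right)
    then show ?thesis using hv[OF g] g by (simp add: T_def)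
  qed
  have face: "face_flow M mu = {v}"
  proof
    have "v \<in> face_flow M mu"
      unfolding face_flow_iff using vF confT by (auto simp: T_def circ_norm)
    then show "{v} \<subseteq> face_flow M mu" by simp
    show "face_flow M mu \<subseteq> {v}"
    proof
      fix x assume x: "x \<in> face_flow M mu"
      have xF: "x \<in> flows M" using x face_flow_iff by blast
      have "x - v = 0"
      proof (rule E)
        show "x - v \<in> flows M" by (rule flows_diff[OF xF vF])
        fix g assume g: "g \<in> T"
        have gc: "g \<in> lattice_circuits M" using g Tsub by auto
        have "2 * (x \<bullet> g) = (norm g)\<^sup>2" using x gc Tconf[OF g] face_flow_iff by blast
        moreover have "2 * (v \<bullet> g) = (norm g)\<^sup>2" using g circ_norm[OF gc] by (simp add: T_def)
        ultimately show "(x - v) \<bullet> g = 0" by (simp add: inner_diff_left)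
      qed
      then show "x \<in> {v}" by simp
    qed
  qed
  have full: "supp y \<subseteq> supp mu" if y: "y \<in> flows M" for y
  proof
    fix e assume ey: "e \<in> supp y"
    show "e \<in> supp mu"
    proof (rule ccontr)
      assume "e \<notin> supp mu"
      then have me: "mu$e = 0" by (simp add: supp_def)
      have gz: "g$e = 0" if "g \<in> T" for g using musgn[OF that] me by (metis sgn_0_0)
      obtain p q where p: "p \<in> flows M" and q: "\<And>w. w \<in> flows M \<Longrightarrow> q \<bullet> w = 0"
          and pq: "axis e (1::real) = p + q"
        using proj_exists by blast
      have pw: "p \<bullet> w = w$e" if "w \<in> flows M" for w
      proof -
        have "w$e = axis e (1::real) \<bullet> w" by (simp add: inner_axis')
        also have "\<dots> = p \<bullet> w" using q[OF that] pq by (simp add: inner_add_left)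
        finally show ?thesis by simp
      qed
      have "p = 0"
      proof (rule E[OF p])
        fix g assume "g \<in> T"
        then show "p \<bullet> g = 0" using pw[of g] gz Tsub circ_flow by auto
      qed
      then have "y$e = 0" using pw[OF y] by simp
      then show False using ey by (simp add: supp_def)
    qed
  qed
  have "{x \<in> flows M. supp x \<subseteq> supp mu} = flows M" using full by blast
  then have "genus_flow M mu = genus_matroid M" by (simp add: genus_flow_def genus_matroid_def)
  then show ?thesis using muL face by blast
qed

theorem mainTheorem16:
  fixes M :: "real^'e::finite^'r::finite"
  assumes "totally_unimodular M"
  shows "(\<forall>\<mu>\<in>int_flows M. genus_flow M \<mu> = genus_matroid M \<longrightarrow>
            (\<exists>v. face_flow M \<mu> = {v} \<and> v extreme_point_of voronoi0 M))
       \<and> (\<forall>v. v extreme_point_of voronoi0 M \<longrightarrow>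
            (\<exists>\<mu>\<in>int_flows M. genus_flow M \<mu> = genus_matroid M \<and> face_flow M \<mu> = {v}))"
  using fwd[OF assms] bwd[OF assms] by blast

end
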